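(* Let $c<1$ be a constant and $p=p(n)=\frac{c}{n}$. Then $\mathbb{P}_{n,p}\big(G \text{ is realizable in } \mathbb{R}^2 \text{ as a distance graph}\big)\to 1$ as $n\to\infty$, where $G$ is the random graph $G(n,p)$.
   Context: $G(n,p)$ is the Erdős–Rényi random graph on $n$ labelled vertices in which each of the $\binom n2$ possible edges is present independently with probability $p$ ($p$ may depend on $n$); $\mathbb{P}_{n,p}$ is the corresponding probability. A distance graph in $\mathbb{R}^d$ is a finite graph $(V,E)$ with $V\subset\mathbb{R}^d$ finite and $E\subseteq\{\{\mathbf{x},\mathbf{y}\}\subseteq V: |\mathbf{x}-\mathbf{y}|=1\}$ (Euclidean norm). A graph is realizable in $\mathbb{R}^d$ as a distance graph if it is isomorphic to some distance graph in $\mathbb{R}^d$, i.e. its vertices can be mapped injectively to points of $\mathbb{R}^d$ so that every edge joins two points at Euclidean distance $1$. *)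

theory Defs
  imports "HOL-Analysis.Analysis"
begin

definition all_edges :: "nat \<Rightarrow> nat set set" where
  "all_edges n = {e. \<exists>u v. u < n \<and> v < n \<and> u \<noteq> v \<and> e = {u, v}}"

definition gnp_prob :: "nat \<Rightarrow> real \<Rightarrow> (nat set set \<Rightarrow> bool) \<Rightarrow> real" where
  "gnp_prob n p P =
     (\<Sum>E\<in>{E. E \<subseteq> all_edges n \<and> P E}.
        p ^ card E * (1 - p) ^ (card (all_edges n) - card E))"

definition distance_realizable_R2 :: "nat set \<Rightarrow> nat set set \<Rightarrow> bool" where
  "distance_realizable_R2 V E =
     (\<exists>f :: nat \<Rightarrow> real^2. inj_on f V \<and>
        (\<forall>e\<in>E. \<forall>u\<in>e. \<forall>v\<in>e. u \<noteq> v \<longrightarrow> dist (f u) (f v) = 1))"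

end

theory Submission
  imports Defs
begin

definition wt :: "nat \<Rightarrow> real \<Rightarrow> nat set set \<Rightarrow> real" where
  "wt n p E = p ^ card E * (1 - p) ^ (card (all_edges n) - card E)"

lemma finite_all_edges: "finite (all_edges n)"
proof -
  have "all_edges n \<subseteq> Pow {0..<n}" unfolding all_edges_def by auto
  thus ?thesis by (rule finite_subset) simp
qed

lemma wt_prod: "E \<subseteq> all_edges n \<Longrightarrow> wt n p E = (\<Prod>x\<in>E. p) * (\<Prod>x\<in>all_edges n - E. 1 - p)"
  using finite_all_edges by (simp add: wt_def card_Diff_subset finite_subset)

lemma prob_superset:
  assumes "F \<subseteq> all_edges n"
  shows "(\<Sum>E\<in>{E. E \<subseteq> all_edges n \<and> F \<subseteq> E}. wt n p E) = p ^ card F"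
proof -
  let ?A = "all_edges n"
  define g where "g x = (if x \<in> F then 0 else 1 - p)" for x
  have fin: "finite ?A" by (rule finite_all_edges)
  have "p ^ card F = (\<Prod>x\<in>?A. p + g x)"
  proof -
    have "(\<Prod>x\<in>?A. p + g x) = (\<Prod>x\<in>?A. if x \<in> F then p else 1)"
      by (rule prod.cong) (auto simp: g_def)
    also have "\<dots> = (\<Prod>x\<in>?A \<inter> {x. x \<in> F}. p)"
      using prod.If_cases[OF fin, of "\<lambda>x. x \<in> F" "\<lambda>x. p" "\<lambda>x. 1"] by simp
    also have "?A \<inter> {x. x \<in> F} = F" using assms by auto
    finally show ?thesis by simp
  qed
  also have "\<dots> = (\<Sum>X\<in>Pow ?A. (\<Prod>x\<in>X. p) * (\<Prod>x\<in>?A-X. g x))"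
    by (rule prod_add[OF fin])
  also have "\<dots> = (\<Sum>X\<in>{E. E \<subseteq> ?A \<and> F \<subseteq> E}. (\<Prod>x\<in>X. p) * (\<Prod>x\<in>?A-X. g x))"
  proof (rule sum.mono_neutral_right)
    show "finite (Pow ?A)" using fin by simp
    show "{E. E \<subseteq> ?A \<and> F \<subseteq> E} \<subseteq> Pow ?A" by auto
    show "\<forall>i\<in>Pow ?A - {E. E \<subseteq> ?A \<and> F \<subseteq> E}. (\<Prod>x\<in>i. p) * (\<Prod>x\<in>?A - i. g x) = 0"
    proof
      fix X assume "X \<in> Pow ?A - {E. E \<subseteq> ?A \<and> F \<subseteq> E}"
      then obtain x where "x \<in> F" "x \<notin> X" by auto
      hence "x \<in> ?A - X" "g x = 0" using assms by (auto simp: g_def)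
      hence "(\<Prod>x\<in>?A - X. g x) = 0" using fin by (meson finite_Diff prod_zero)
      thus "(\<Prod>x\<in>X. p) * (\<Prod>x\<in>?A - X. g x) = 0" by simp
    qed
  qed
  also have "\<dots> = (\<Sum>E\<in>{E. E \<subseteq> ?A \<and> F \<subseteq> E}. wt n p E)"
  proof (rule sum.cong[OF refl])
    fix X assume "X \<in> {E. E \<subseteq> ?A \<and> F \<subseteq> E}"
    hence "(\<Prod>x\<in>?A-X. g x) = (\<Prod>x\<in>?A-X. 1 - p)" by (intro prod.cong) (auto simp: g_def)
    thus "(\<Prod>x\<in>X. p) * (\<Prod>x\<in>?A-X. g x) = wt n p X" using wt_prod[of X n p] \<open>X \<in> _\<close> by simp
  qed
  finally show ?thesis by simp
qed

lemma gnp_wt: "gnp_prob n p P = (\<Sum>E\<in>{E. E \<subseteq> all_edges n \<and> P E}. wt n p E)"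
  by (simp add: gnp_prob_def wt_def)

lemma wt_nonneg: "0 \<le> p \<Longrightarrow> p \<le> 1 \<Longrightarrow> 0 \<le> wt n p E"
  by (simp add: wt_def)

lemma finite_subs: "finite {E. E \<subseteq> all_edges n \<and> P E}"
  by (rule finite_subset[of _ "Pow (all_edges n)"]) (auto simp: finite_all_edges)

lemma gnp_total: "gnp_prob n p (\<lambda>E. True) = 1"
  using prob_superset[of "{}" n p] by (simp add: gnp_wt)

lemma gnp_compl: "gnp_prob n p P = 1 - gnp_prob n p (\<lambda>E. \<not> P E)"
proof -
  have "gnp_prob n p (\<lambda>E. True) = gnp_prob n p P + gnp_prob n p (\<lambda>E. \<not> P E)"
    unfolding gnp_wt
    by (subst sum.union_disjoint[symmetric]) (auto intro: finite_subs intro!: sum.cong)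
  thus ?thesis using gnp_total[of n p] by simp
qed

lemma gnp_mono:
  assumes "0 \<le> p" "p \<le> 1" "\<And>E. E \<subseteq> all_edges n \<Longrightarrow> P E \<Longrightarrow> Q E"
  shows "gnp_prob n p P \<le> gnp_prob n p Q"
  unfolding gnp_wt
  by (rule sum_mono2[OF finite_subs]) (use assms in \<open>auto intro: wt_nonneg\<close>)

lemma gnp_nonneg: "0 \<le> p \<Longrightarrow> p \<le> 1 \<Longrightarrow> 0 \<le> gnp_prob n p P"
  unfolding gnp_wt by (intro sum_nonneg wt_nonneg)

lemma gnp_or:
  assumes "0 \<le> p" "p \<le> 1"
  shows "gnp_prob n p (\<lambda>E. P E \<or> Q E) \<le> gnp_prob n p P + gnp_prob n p Q"
proof -
  have eq: "{E. E \<subseteq> all_edges n \<and> (P E \<or> Q E)} = {E. E \<subseteq> all_edges n \<and> P E} \<union> {E. E \<subseteq> all_edges n \<and> Q E}"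
    by auto
  have "0 \<le> sum (wt n p) ({E. E \<subseteq> all_edges n \<and> P E} \<inter> {E. E \<subseteq> all_edges n \<and> Q E})"
    by (intro sum_nonneg wt_nonneg assms)
  thus ?thesis unfolding gnp_wt eq
    using sum_Un[OF finite_subs[of n P] finite_subs[of n Q], where f="wt n p"] by linarith
qed

lemma gnp_ex:
  assumes "0 \<le> p" "p \<le> 1" "finite I"
  shows "gnp_prob n p (\<lambda>E. \<exists>k\<in>I. Q k E) \<le> (\<Sum>k\<in>I. gnp_prob n p (Q k))"
  using assms(3)
proof (induction I rule: finite_induct)
  case empty
  then show ?case unfolding gnp_wt by simp
next
  case (insert a I)
  have "gnp_prob n p (\<lambda>E. \<exists>k\<in>insert a I. Q k E) = gnp_prob n p (\<lambda>E. Q a E \<or> (\<exists>k\<in>I. Q k E))"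
    by simp
  also have "\<dots> \<le> gnp_prob n p (Q a) + gnp_prob n p (\<lambda>E. \<exists>k\<in>I. Q k E)"
    by (rule gnp_or[OF assms(1,2)])
  also have "\<dots> \<le> gnp_prob n p (Q a) + (\<Sum>k\<in>I. gnp_prob n p (Q k))"
    using insert by simp
  finally show ?case using insert by simp
qed

definition gpath :: "nat set set \<Rightarrow> nat list \<Rightarrow> bool" where
  "gpath E xs \<longleftrightarrow> (\<forall>k. Suc k < length xs \<longrightarrow> {xs!k, xs!Suc k} \<in> E)"

definition wvalid :: "nat list \<Rightarrow> nat \<Rightarrow> nat \<Rightarrow> bool" where
  "wvalid xs i j \<longleftrightarrow> distinct xs \<and> 3 \<le> length xs \<and> 2 \<le> i \<and> i < length xs \<and>
     j + 3 \<le> length xs \<and> \<not> (i = length xs - 1 \<and> j = 0)"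

definition wedges :: "nat list \<Rightarrow> nat \<Rightarrow> nat \<Rightarrow> nat set set" where
  "wedges xs i j = (\<lambda>k. {xs!k, xs!Suc k}) ` {..<length xs - 1} \<union>
     {{xs!0, xs!i}, {xs!(length xs - 1), xs!j}}"

definition nowit :: "nat set set \<Rightarrow> bool" where
  "nowit E \<longleftrightarrow> \<not> (\<exists>xs i j. wvalid xs i j \<and> wedges xs i j \<subseteq> E)"

lemma wedges_sub: "wedges xs i j \<subseteq> E \<longleftrightarrow>
   gpath E xs \<and> {xs!0, xs!i} \<in> E \<and> {xs!(length xs - 1), xs!j} \<in> E"
  unfolding wedges_def gpath_def by (auto simp: less_diff_conv)

lemma card_wedges:
  assumes "wvalid xs i j"
  shows "card (wedges xs i j) = length xs + 1"
proof -
  let ?m = "length xs - 1"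
  let ?f = "\<lambda>k. {xs!k, xs!Suc k}"
  have d: "distinct xs" and L: "3 \<le> length xs" and i: "2 \<le> i" "i < length xs"
    and j: "j + 3 \<le> length xs" and ij: "\<not> (i = ?m \<and> j = 0)"
    using assms by (auto simp: wvalid_def)
  have ne0: "xs \<noteq> []" using L by auto
  have eq: "\<And>a b. a < length xs \<Longrightarrow> b < length xs \<Longrightarrow> xs!a = xs!b \<longleftrightarrow> a = b"
    using d by (simp add: nth_eq_iff_index_eq)
  have inj: "inj_on ?f {..<?m}"
  proof (rule inj_onI)
    fix k l assume k: "k \<in> {..<?m}" and l: "l \<in> {..<?m}" and e: "?f k = ?f l"
    hence "xs!k \<in> ?f l" by auto
    hence "k = l \<or> k = Suc l" using eq k l by auto
    moreover have "xs!l \<in> ?f k" using e by auto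
    hence "l = k \<or> l = Suc k" using eq k l by auto
    ultimately show "k = l" by auto
  qed
  have n1: "{xs!0, xs!i} \<notin> ?f ` {..<?m}"
  proof
    assume "{xs!0, xs!i} \<in> ?f ` {..<?m}"
    then obtain k where k: "k < ?m" and e: "{xs!0, xs!i} = ?f k" by auto
    hence o: "xs!0 = xs!k \<or> xs!0 = xs!Suc k" by auto
    have k1: "k < length xs" "Suc k < length xs" using k L by auto
    have ne: "xs \<noteq> []" using k1 by auto
    have "xs!0 \<noteq> xs!Suc k" using d k1 ne nth_eq_iff_index_eq[of xs 0 "Suc k"] by auto
    hence "xs!0 = xs!k" using o by blast
    hence "k = 0" using d k1 ne nth_eq_iff_index_eq[of xs 0 k] by auto
    hence "xs!i = xs!1" using e eq i L by (auto simp: doubleton_eq_iff)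
    thus False using eq i L by auto
  qed
  have n2: "{xs!?m, xs!j} \<notin> ?f ` {..<?m}"
  proof
    assume "{xs!?m, xs!j} \<in> ?f ` {..<?m}"
    then obtain k where k: "k < ?m" and e: "{xs!?m, xs!j} = ?f k" by auto
    hence "xs!?m \<in> ?f k" by auto
    hence "?m = Suc k" using eq k L by auto
    hence "xs!j = xs!k" using e eq j L k by (auto simp: doubleton_eq_iff)
    thus False using eq j L k \<open>?m = Suc k\<close> by auto
  qed
  have n3: "{xs!0, xs!i} \<noteq> {xs!?m, xs!j}"
  proof
    assume e: "{xs!0, xs!i} = {xs!?m, xs!j}"
    have "xs!0 \<noteq> xs!?m" using d L ne0 nth_eq_iff_index_eq[of xs 0 ?m] by auto
    hence "xs!0 = xs!j" "xs!i = xs!?m" using e by (auto simp: doubleton_eq_iff)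
    hence "j = 0" "i = ?m" using d L ne0 i j nth_eq_iff_index_eq[of xs 0 j] nth_eq_iff_index_eq[of xs i ?m] by auto
    thus False using ij by simp
  qed
  have "card (wedges xs i j) = card (?f ` {..<?m}) + 2"
    unfolding wedges_def using n1 n2 n3 by (simp add: card_insert_if)
  also have "card (?f ` {..<?m}) = ?m" using card_image[OF inj] by simp
  finally show ?thesis using L by simp
qed

lemma edge_in_all:
  assumes "distinct xs" "set xs \<subseteq> {..<n}" "a < length xs" "b < length xs" "a \<noteq> b"
  shows "{xs!a, xs!b} \<in> all_edges n"
proof -
  have "xs!a \<in> set xs" "xs!b \<in> set xs" using assms(3,4) by simp_all
  hence "xs!a < n" "xs!b < n" using assms(2) by auto
  moreover have "xs!a \<noteq> xs!b" using assms nth_eq_iff_index_eq by blast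
  ultimately show ?thesis unfolding all_edges_def by blast
qed

lemma wedges_all:
  assumes "wvalid xs i j" "set xs \<subseteq> {..<n}"
  shows "wedges xs i j \<subseteq> all_edges n"
proof -
  have d: "distinct xs" and L: "3 \<le> length xs" and i: "2 \<le> i" "i < length xs"
    and j: "j + 3 \<le> length xs"
    using assms by (auto simp: wvalid_def)
  have ne: "xs \<noteq> []" using L by auto
  have "{xs!k, xs!Suc k} \<in> all_edges n" if "k < length xs - 1" for k
    using edge_in_all[OF d assms(2), of k "Suc k"] that by simp
  moreover have "{xs!0, xs!i} \<in> all_edges n"
    using edge_in_all[OF d assms(2), of 0 i] i ne by simp
  moreover have "{xs!(length xs - 1), xs!j} \<in> all_edges n"
    using edge_in_all[OF d assms(2), of "length xs - 1" j] j L by simp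
  ultimately show ?thesis unfolding wedges_def by blast
qed

lemma wit_set:
  assumes "wvalid xs i j" "wedges xs i j \<subseteq> E" "E \<subseteq> all_edges n"
  shows "set xs \<subseteq> {..<n}"
proof
  fix x assume "x \<in> set xs"
  then obtain k where k: "k < length xs" "x = xs!k" by (auto simp: in_set_conv_nth)
  have L: "3 \<le> length xs" using assms(1) by (simp add: wvalid_def)
  have "\<exists>e\<in>wedges xs i j. x \<in> e"
  proof (cases "k < length xs - 1")
    case True thus ?thesis unfolding wedges_def using k by auto
  next
    case False hence "k = length xs - 1" using k by auto
    thus ?thesis unfolding wedges_def using k by auto
  qed
  then obtain e where "e \<in> all_edges n" "x \<in> e" using assms by auto
  thus "x \<in> {..<n}" unfolding all_edges_def by auto
qed

lemma term_bound:
  assumes "0 \<le> p" "p \<le> 1" "set xs \<subseteq> {..<n}" "length xs = l"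
  shows "gnp_prob n p (\<lambda>E. wvalid xs i j \<and> wedges xs i j \<subseteq> E) \<le> p ^ (l + 1)"
proof (cases "wvalid xs i j")
  case True
  have "gnp_prob n p (\<lambda>E. wvalid xs i j \<and> wedges xs i j \<subseteq> E) = p ^ card (wedges xs i j)"
    using True prob_superset[OF wedges_all[OF True assms(3)], of p] by (simp add: gnp_wt)
  thus ?thesis using card_wedges[OF True] assms by simp
next
  case False
  thus ?thesis using assms by (simp add: gnp_wt)
qed

lemma bad_bound:
  assumes p: "0 \<le> p" "p \<le> 1"
  shows "gnp_prob n p (\<lambda>E. \<not> nowit E) \<le> (\<Sum>l\<le>n. real n ^ l * real l ^ 2 * p ^ (l + 1))"
proof -
  define L where "L l = {xs. set xs \<subseteq> {..<n} \<and> length xs = l}" for l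
  have finL: "finite (L l)" for l unfolding L_def by (simp add: finite_lists_length_eq)
  have cardL: "card (L l) = n ^ l" for l unfolding L_def by (simp add: card_lists_length_eq)
  define W where "W xs i j E \<longleftrightarrow> wvalid xs i j \<and> wedges xs i j \<subseteq> E" for xs i j E
  have "gnp_prob n p (\<lambda>E. \<not> nowit E) \<le>
        gnp_prob n p (\<lambda>E. \<exists>l\<in>{..n}. \<exists>xs\<in>L l. \<exists>i\<in>{..<l}. \<exists>j\<in>{..<l}. W xs i j E)"
  proof (rule gnp_mono[OF p])
    fix E assume E: "E \<subseteq> all_edges n" "\<not> nowit E"
    then obtain xs i j where w: "wvalid xs i j" "wedges xs i j \<subseteq> E" by (auto simp: nowit_def)
    have s: "set xs \<subseteq> {..<n}" by (rule wit_set[OF w E(1)])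
    have "length xs \<le> n"
      using card_mono[OF _ s] distinct_card w(1) by (fastforce simp: wvalid_def)
    moreover have "i < length xs" "j < length xs" using w(1) by (auto simp: wvalid_def)
    ultimately show "\<exists>l\<in>{..n}. \<exists>xs\<in>L l. \<exists>i\<in>{..<l}. \<exists>j\<in>{..<l}. W xs i j E"
      using s w unfolding L_def W_def by blast
  qed
  also have "\<dots> \<le> (\<Sum>l\<le>n. gnp_prob n p (\<lambda>E. \<exists>xs\<in>L l. \<exists>i\<in>{..<l}. \<exists>j\<in>{..<l}. W xs i j E))"
    by (rule gnp_ex[OF p]) simp
  also have "\<dots> \<le> (\<Sum>l\<le>n. real n ^ l * real l ^ 2 * p ^ (l + 1))"
  proof (rule sum_mono)
    fix l
    have "gnp_prob n p (\<lambda>E. \<exists>xs\<in>L l. \<exists>i\<in>{..<l}. \<exists>j\<in>{..<l}. W xs i j E)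
       \<le> (\<Sum>xs\<in>L l. gnp_prob n p (\<lambda>E. \<exists>i\<in>{..<l}. \<exists>j\<in>{..<l}. W xs i j E))"
      by (rule gnp_ex[OF p finL])
    also have "\<dots> \<le> (\<Sum>xs\<in>L l. real l * (real l * p ^ (l + 1)))"
    proof (rule sum_mono)
      fix xs assume xs: "xs \<in> L l"
      have "gnp_prob n p (\<lambda>E. \<exists>i\<in>{..<l}. \<exists>j\<in>{..<l}. W xs i j E)
          \<le> (\<Sum>i<l. gnp_prob n p (\<lambda>E. \<exists>j\<in>{..<l}. W xs i j E))"
        by (rule gnp_ex[OF p]) simp
      also have "\<dots> \<le> (\<Sum>i<l. real l * p ^ (l + 1))"
      proof (rule sum_mono)
        fix i
        have "gnp_prob n p (\<lambda>E. \<exists>j\<in>{..<l}. W xs i j E) \<le> (\<Sum>j<l. gnp_prob n p (W xs i j))"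
          by (rule gnp_ex[OF p]) simp
        also have "\<dots> \<le> (\<Sum>j<l. p ^ (l + 1))"
        proof (rule sum_mono)
          fix j
          have "W xs i j = (\<lambda>E. wvalid xs i j \<and> wedges xs i j \<subseteq> E)" by (simp add: W_def fun_eq_iff)
          thus "gnp_prob n p (W xs i j) \<le> p ^ (l + 1)"
            using term_bound[OF p, where xs=xs and l=l and i=i and j=j and n=n] xs by (simp add: L_def)
        qed
        finally show "gnp_prob n p (\<lambda>E. \<exists>j\<in>{..<l}. W xs i j E) \<le> real l * p ^ (l + 1)" by simp
      qed
      finally show "gnp_prob n p (\<lambda>E. \<exists>i\<in>{..<l}. \<exists>j\<in>{..<l}. W xs i j E) \<le> real l * (real l * p ^ (l + 1))"
        by simp
    qed
    also have "\<dots> = real n ^ l * real l ^ 2 * p ^ (l + 1)"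
      using cardL[of l] by (simp add: power2_eq_square)
    finally show "gnp_prob n p (\<lambda>E. \<exists>xs\<in>L l. \<exists>i\<in>{..<l}. \<exists>j\<in>{..<l}. W xs i j E)
        \<le> real n ^ l * real l ^ 2 * p ^ (l + 1)" .
  qed
  finally show ?thesis .
qed

lemma summable_sq_geom:
  fixes c :: real
  assumes "0 \<le> c" "c < 1"
  shows "summable (\<lambda>l. real l ^ 2 * c ^ (l + 1))"
proof -
  define e where "e = root 3 c"
  have e0: "0 \<le> e" and e1: "e < 1" and e3: "e ^ 3 = c"
    using assms by (auto simp: e_def)
  have "(\<lambda>l. of_nat l * e ^ l) \<longlonglongrightarrow> 0"
    by (rule powser_times_n_limit_0) (use e0 e1 in simp)
  hence ev: "eventually (\<lambda>l. real l * e ^ l < 1) sequentially"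
    by (rule order_tendstoD) simp
  have "eventually (\<lambda>l. norm (real l ^ 2 * c ^ (l + 1)) \<le> e ^ l) sequentially"
  proof (rule eventually_mono[OF ev])
    fix l assume h: "real l * e ^ l < 1"
    have a: "0 \<le> real l * e ^ l" using e0 by simp
    have "(real l * e ^ l) ^ 2 \<le> 1" using h a by (simp add: power_le_one)
    have "(e ^ 3) ^ l = (e ^ l) ^ 3" by (simp add: power_mult[symmetric] mult.commute)
    hence cl: "c ^ (l + 1) = c * (e ^ l) ^ 3" using e3 by simp
    have "norm (real l ^ 2 * c ^ (l + 1)) = real l ^ 2 * c ^ (l + 1)" using assms by simp
    also have "\<dots> = (real l * e ^ l) ^ 2 * e ^ l * c"
      unfolding cl by (simp add: power2_eq_square power3_eq_cube algebra_simps)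
    finally have "norm (real l ^ 2 * c ^ (l + 1)) = (real l * e ^ l) ^ 2 * e ^ l * c" .
    also have "\<dots> \<le> 1 * e ^ l * 1"
      using \<open>(real l * e ^ l) ^ 2 \<le> 1\<close> assms e0
      by (intro mult_mono) (auto)
    finally show "norm (real l ^ 2 * c ^ (l + 1)) \<le> e ^ l" by simp
  qed
  moreover have "summable (\<lambda>l. e ^ l)" by (rule summable_geometric) (use e0 e1 in simp)
  ultimately show ?thesis by (rule summable_comparison_test_ev)
qed

lemma circ_point:
  fixes a :: complex
  assumes "finite B"
  shows "\<exists>z. cmod (z - a) = 1 \<and> z \<notin> B"
proof -
  define g where "g t = a + Complex t (sqrt (1 - t^2))" for t
  have inj: "inj_on g {0..1}" by (rule inj_onI) (auto simp: g_def)
  have "infinite (g ` {0..1})"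
    using finite_imageD[OF _ inj] infinite_Icc[of "0::real" 1] by auto
  hence "\<not> g ` {0..1} \<subseteq> B" using assms finite_subset by blast
  then obtain t where t: "t \<in> {0..1}" "g t \<notin> B" unfolding image_subset_iff by blast
  have "t^2 \<le> 1" using t by (simp add: power_le_one)
  hence "cmod (g t - a) = 1" by (simp add: g_def cmod_def)
  thus ?thesis using t by blast
qed

lemma polygon:
  assumes L: "2 \<le> L"
  shows "\<exists>Q::nat \<Rightarrow> complex. (\<forall>s. Q (s mod L) = Q s) \<and> (\<forall>s. cmod (Q (Suc s) - Q s) = 1)
           \<and> inj_on Q {..<L} \<and> (\<exists>r. \<forall>s. cmod (Q s) = r)"
proof -
  define w where "w = exp (2 * of_real pi * \<i> / of_nat L)"
  have wpow: "w ^ s = exp (of_nat s * (2 * of_real pi * \<i> / of_nat L))" for s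
    by (simp only: w_def exp_of_nat_mult)
  have wL: "w ^ L = 1" unfolding wpow using L by simp
  have wn1: "w ^ s \<noteq> 1" if s: "0 < s" "s < L" for s
  proof
    assume "w ^ s = 1"
    then obtain k :: int where k: "Im (of_nat s * (2 * of_real pi * \<i> / of_nat L)) = of_int (2 * k) * pi"
      unfolding wpow exp_eq_1 by blast
    hence "2 * pi * real s / real L = 2 * pi * of_int k" by (simp add: mult_ac)
    hence "real s = of_int k * real L" using L by (simp add: field_simps)
    hence "int s = k * int L" by (metis of_int_eq_iff of_int_mult of_int_of_nat_eq)
    moreover have "0 < k" using \<open>int s = k * int L\<close> s by (smt (verit) mult_nonpos_nonneg of_nat_0_le_iff of_nat_0_less_iff)
    ultimately have "int L \<le> int s" by (simp add: mult_le_cancel_right1)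
    thus False using s by simp
  qed
  have w1: "w \<noteq> 1" using wn1[of 1] L by simp
  have nw: "norm w = 1" by (simp add: w_def)
  define Q where "Q s = w ^ s / (w - 1)" for s
  have "Q (s mod L) = Q s" for s
  proof -
    have "w ^ s = w ^ (L * (s div L) + s mod L)" by simp
    also have "\<dots> = (w ^ L) ^ (s div L) * w ^ (s mod L)" by (simp only: power_add power_mult)
    finally show ?thesis using wL by (simp add: Q_def)
  qed
  moreover have "cmod (Q (Suc s) - Q s) = 1" for s
  proof -
    have "Q (Suc s) - Q s = (w ^ s * (w - 1)) / (w - 1)"
      by (simp add: Q_def diff_divide_distrib[symmetric] algebra_simps)
    also have "\<dots> = w ^ s" using w1 by simp
    finally have "Q (Suc s) - Q s = w ^ s" .
    thus ?thesis using nw by (simp add: norm_power)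
  qed
  moreover have "inj_on Q {..<L}"
  proof (rule inj_onI)
    fix a b assume a: "a \<in> {..<L}" and b: "b \<in> {..<L}" and e: "Q a = Q b"
    hence e': "w ^ a = w ^ b" using w1 by (simp add: Q_def)
    have w0: "w ^ k \<noteq> 0" for k using nw by (metis norm_power norm_zero power_one zero_neq_one)
    show "a = b"
    proof (rule ccontr)
      assume "a \<noteq> b"
      then consider "a < b" | "b < a" by linarith
      thus False
      proof cases
        case 1
        have "w ^ b = w ^ a * w ^ (b - a)" using 1 by (simp add: power_add[symmetric])
        hence "w ^ (b - a) = 1" using e' w0[of a] w0[of 1] by auto
        moreover have "0 < b - a" "b - a < L" using 1 b by auto
        ultimately show False using wn1[of "b - a"] by blast
      next
        case 2
        have "w ^ a = w ^ b * w ^ (a - b)" using 2 by (simp add: power_add[symmetric])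
        hence "w ^ (a - b) = 1" using e' w0[of b] w0[of 1] by auto
        moreover have "0 < a - b" "a - b < L" using 2 a by auto
        ultimately show False using wn1[of "a - b"] by blast
      qed
    qed
  qed
  moreover have "\<forall>s. cmod (Q s) = 1 / cmod (w - 1)"
    using nw by (simp add: Q_def norm_divide norm_power)
  ultimately show ?thesis by blast
qed


definition wfg :: "nat set \<Rightarrow> nat set set \<Rightarrow> bool" where
  "wfg V E \<longleftrightarrow> finite V \<and> (\<forall>e\<in>E. \<exists>a b. a \<in> V \<and> b \<in> V \<and> a \<noteq> b \<and> e = {a, b})"

definition nb :: "nat set set \<Rightarrow> nat \<Rightarrow> nat set" where
  "nb E v = {u. {v, u} \<in> E}"

definition cyc :: "nat set set \<Rightarrow> nat list \<Rightarrow> bool" where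
  "cyc E xs \<longleftrightarrow> (\<forall>t<length xs. {xs!t, xs!(Suc t mod length xs)} \<in> E)"

definition lpath :: "nat set \<Rightarrow> nat set set \<Rightarrow> nat list \<Rightarrow> bool" where
  "lpath V E xs \<longleftrightarrow> gpath E xs \<and> distinct xs \<and> set xs \<subseteq> V \<and> xs \<noteq> []"

definition longest :: "nat set \<Rightarrow> nat set set \<Rightarrow> nat list \<Rightarrow> bool" where
  "longest V E xs \<longleftrightarrow> lpath V E xs \<and> (\<forall>ys. lpath V E ys \<longrightarrow> length ys \<le> length xs)"

lemma wfg_edge:
  assumes "wfg V E" "{a, b} \<in> E"
  shows "a \<noteq> b" "a \<in> V" "b \<in> V"
proof -
  obtain c d where "c \<in> V" "d \<in> V" "c \<noteq> d" "{a, b} = {c, d}"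
    using assms unfolding wfg_def by blast
  thus "a \<noteq> b" "a \<in> V" "b \<in> V" by (auto simp: doubleton_eq_iff)
qed

lemma nb_sub: "wfg V E \<Longrightarrow> nb E v \<subseteq> V"
  using wfg_edge(3) unfolding nb_def by blast

lemma nowit_mono: "E' \<subseteq> E \<Longrightarrow> nowit E \<Longrightarrow> nowit E'"
  unfolding nowit_def by blast

lemma wfg_remove: "wfg V E \<Longrightarrow> wfg (V - S) {e\<in>E. e \<inter> S = {}}"
  unfolding wfg_def by fastforce

lemma gpath_Cons:
  assumes "gpath E xs" "xs \<noteq> []" "{y, xs!0} \<in> E"
  shows "gpath E (y # xs)"
  unfolding gpath_def
proof (intro allI impI)
  fix k assume "Suc k < length (y # xs)"
  thus "{(y # xs) ! k, (y # xs) ! Suc k} \<in> E"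
    using assms by (cases k) (auto simp: gpath_def)
qed

lemma gpath_snoc:
  assumes "gpath E xs" "xs \<noteq> []" "{xs!(length xs - 1), y} \<in> E"
  shows "gpath E (xs @ [y])"
  unfolding gpath_def
proof (intro allI impI)
  fix k assume k: "Suc k < length (xs @ [y])"
  show "{(xs @ [y]) ! k, (xs @ [y]) ! Suc k} \<in> E"
  proof (cases "Suc k < length xs")
    case True thus ?thesis using assms(1) by (simp add: nth_append gpath_def)
  next
    case False hence "k = length xs - 1" using k by simp
    thus ?thesis using assms(2,3) by (simp add: nth_append)
  qed
qed

lemma ext_hd:
  assumes "wfg V E" "longest V E xs" "{xs!0, y} \<in> E"
  shows "y \<in> set xs"
proof (rule ccontr)
  assume y: "y \<notin> set xs"
  have lp: "lpath V E xs" using assms(2) by (simp add: longest_def)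
  have e: "{y, xs!0} \<in> E" using assms(3) by (simp add: insert_commute)
  have "gpath E (y # xs)" by (rule gpath_Cons) (use lp e in \<open>auto simp: lpath_def\<close>)
  hence "lpath V E (y # xs)"
    using lp y wfg_edge(3)[OF assms(1,3)] by (auto simp: lpath_def)
  hence "length (y # xs) \<le> length xs" using assms(2) unfolding longest_def by blast
  thus False by simp
qed

lemma ext_last:
  assumes "wfg V E" "longest V E xs" "{xs!(length xs - 1), y} \<in> E"
  shows "y \<in> set xs"
proof (rule ccontr)
  assume y: "y \<notin> set xs"
  have lp: "lpath V E xs" using assms(2) by (simp add: longest_def)
  have "gpath E (xs @ [y])" by (rule gpath_snoc) (use lp assms(3) in \<open>auto simp: lpath_def\<close>)
  hence "lpath V E (xs @ [y])"
    using lp y wfg_edge(3)[OF assms(1,3)] by (auto simp: lpath_def)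
  hence "length (xs @ [y]) \<le> length xs" using assms(2) unfolding longest_def by blast
  thus False by simp
qed

lemma two_elems:
  assumes "2 \<le> card A"
  obtains a b where "a \<in> A" "b \<in> A" "a \<noteq> b"
proof -
  have "finite A" using assms by (metis card.infinite not_numeral_le_zero)
  moreover have "\<not> card A \<le> Suc 0" using assms by simp
  ultimately show ?thesis using that card_le_Suc0_iff_eq by blast
qed

lemma nbr_index:
  assumes "wfg V E" "2 \<le> card (nb E v)" "\<And>u. u \<in> nb E v \<Longrightarrow> u \<in> set xs"
    "distinct xs" "q < length xs" "xs!q = v"
  shows "\<exists>k<length xs. k \<noteq> q \<and> k \<noteq> r \<and> {v, xs!k} \<in> E"
proof -
  obtain a b where ab: "a \<in> nb E v" "b \<in> nb E v" "a \<noteq> b" using two_elems[OF assms(2)] by blast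
  obtain ia where ia: "ia < length xs" "xs!ia = a" using assms(3)[OF ab(1)] by (auto simp: in_set_conv_nth)
  obtain ib where ib: "ib < length xs" "xs!ib = b" using assms(3)[OF ab(2)] by (auto simp: in_set_conv_nth)
  have ea: "{v, a} \<in> E" and eb: "{v, b} \<in> E" using ab by (auto simp: nb_def)
  have "a \<noteq> v" "b \<noteq> v" using wfg_edge(1)[OF assms(1) ea] wfg_edge(1)[OF assms(1) eb] by auto
  hence "ia \<noteq> q" "ib \<noteq> q" using ia ib assms(6) by auto
  moreover have "ia \<noteq> ib" using ia ib ab(3) by auto
  ultimately show ?thesis using ia ib ea eb by (metis)
qed

lemma cyc_longest:
  assumes wf: "wfg V E" and nw: "nowit E" and lg: "longest V E xs"
    and d0: "2 \<le> card (nb E (xs!0))" and d1: "2 \<le> card (nb E (xs!(length xs - 1)))"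
  shows "cyc E xs \<and> 3 \<le> length xs"
proof -
  have lp: "lpath V E xs" using lg by (simp add: longest_def)
  hence gp: "gpath E xs" and d: "distinct xs" and ne: "xs \<noteq> []" by (auto simp: lpath_def)
  define m where "m = length xs - 1"
  have Lm: "length xs = Suc m" using ne by (simp add: m_def)
  obtain i where i: "i < length xs" "i \<noteq> 0" "i \<noteq> 1" "{xs!0, xs!i} \<in> E"
    using nbr_index[OF wf d0 _ d, of 0 1] ext_hd[OF wf lg] ne by (auto simp: nb_def)
  obtain j where j: "j < length xs" "j \<noteq> m" "j \<noteq> m - 1" "{xs!m, xs!j} \<in> E"
    using nbr_index[OF wf d1 _ d, of m "m - 1"] ext_last[OF wf lg] ne by (auto simp: nb_def m_def)
  have i2: "2 \<le> i" using i by simp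
  have L3: "3 \<le> length xs" using i by simp
  have j3: "j + 3 \<le> length xs" using j Lm by simp
  have "i = m \<and> j = 0"
  proof (rule ccontr)
    assume "\<not> (i = m \<and> j = 0)"
    hence "wvalid xs i j" using d L3 i2 i(1) j3 by (simp add: wvalid_def m_def)
    moreover have "wedges xs i j \<subseteq> E" using gp i(4) j(4) by (simp add: wedges_sub m_def)
    ultimately show False using nw by (auto simp: nowit_def)
  qed
  hence em: "{xs!m, xs!0} \<in> E" using i(4) by (simp add: insert_commute)
  have "cyc E xs" unfolding cyc_def
  proof (intro allI impI)
    fix t assume t: "t < length xs"
    show "{xs ! t, xs ! (Suc t mod length xs)} \<in> E"
    proof (cases "Suc t < length xs")
      case True thus ?thesis using gp by (simp add: gpath_def)
    next
      case False hence "t = m" using t Lm by simp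
      thus ?thesis using em Lm by simp
    qed
  qed
  thus ?thesis using L3 by simp
qed

lemma cyc_gpath: "cyc E xs \<Longrightarrow> gpath E xs"
  unfolding cyc_def gpath_def by (metis Suc_lessD mod_less)

lemma cyc_rotate: "cyc E xs \<Longrightarrow> cyc E (rotate k xs)"
  unfolding cyc_def
proof (intro allI impI)
  fix t assume c: "\<forall>t<length xs. {xs ! t, xs ! (Suc t mod length xs)} \<in> E"
    and t: "t < length (rotate k xs)"
  let ?L = "length xs"
  have tL: "t < ?L" using t by simp
  have L0: "0 < ?L" using tL by linarith
  have a: "rotate k xs ! t = xs ! ((k + t) mod ?L)" using tL by (simp add: nth_rotate)
  have b: "rotate k xs ! (Suc t mod ?L) = xs ! ((k + Suc t mod ?L) mod ?L)"
    using L0 by (simp add: nth_rotate)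
  have "(k + Suc t mod ?L) mod ?L = Suc ((k + t) mod ?L) mod ?L"
    by (simp add: mod_add_right_eq mod_Suc_eq)
  hence "rotate k xs ! (Suc t mod ?L) = xs ! (Suc ((k + t) mod ?L) mod ?L)" using b by simp
  moreover have "{xs ! ((k + t) mod ?L), xs ! (Suc ((k + t) mod ?L) mod ?L)} \<in> E"
    using c L0 by simp
  ultimately show "{rotate k xs ! t, rotate k xs ! (Suc t mod length (rotate k xs))} \<in> E"
    using a by simp
qed

lemma longest_rotate:
  assumes "longest V E xs" "cyc E xs"
  shows "longest V E (rotate k xs)"
proof -
  have "lpath V E (rotate k xs)"
    using assms cyc_gpath[OF cyc_rotate[OF assms(2)]] by (auto simp: longest_def lpath_def)
  thus ?thesis using assms(1) by (auto simp: longest_def)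
qed

lemma nbrs_hd:
  assumes wf: "wfg V E" and nw: "nowit E" and lg: "longest V E xs" and c: "cyc E xs"
    and L3: "3 \<le> length xs" and e: "{xs!0, y} \<in> E"
  shows "y = xs!1 \<or> y = xs!(length xs - 1)"
proof (rule ccontr)
  assume ny: "\<not> (y = xs!1 \<or> y = xs!(length xs - 1))"
  have d: "distinct xs" using lg by (simp add: longest_def lpath_def)
  have "y \<in> set xs" by (rule ext_hd[OF wf lg e])
  then obtain i where i: "i < length xs" "xs!i = y" by (auto simp: in_set_conv_nth)
  have "i \<noteq> 0"
  proof
    assume "i = 0" thus False using wfg_edge(1)[OF wf e] i by simp
  qed
  moreover have "i \<noteq> 1" "i \<noteq> length xs - 1" using ny i by auto
  ultimately have w: "wvalid xs i 0" using d L3 i by (auto simp: wvalid_def)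
  have "{xs!(length xs - 1), xs!0} \<in> E"
    using c L3 unfolding cyc_def by (metis (no_types) Suc_diff_1 diff_less less_le_trans mod_self
        numeral_3_eq_3 zero_less_Suc zero_less_one)
  hence "wedges xs i 0 \<subseteq> E" using cyc_gpath[OF c] e i by (simp add: wedges_sub)
  thus False using w nw by (auto simp: nowit_def)
qed

lemma cyc_nbrs:
  assumes wf: "wfg V E" and nw: "nowit E" and lg: "longest V E xs" and c: "cyc E xs"
    and L3: "3 \<le> length xs" and t: "t < length xs" and e: "{xs!t, y} \<in> E"
  shows "y = xs!(Suc t mod length xs) \<or> y = xs!((t + length xs - 1) mod length xs)"
proof -
  let ?L = "length xs"
  let ?r = "rotate t xs"
  have L0: "0 < ?L" using t by linarith
  have r0: "?r ! 0 = xs ! t" using L0 t nth_rotate[of 0 xs t] by simp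
  have r1: "?r ! 1 = xs ! (Suc t mod ?L)" using L3 nth_rotate[of 1 xs t] by simp
  have r2: "?r ! (?L - 1) = xs ! ((t + ?L - 1) mod ?L)" using L3 nth_rotate[of "?L - 1" xs t] by simp
  have "y = ?r ! 1 \<or> y = ?r ! (length ?r - 1)"
    by (rule nbrs_hd[OF wf nw longest_rotate[OF lg c] cyc_rotate[OF c]]) (use L3 e r0 in auto)
  thus ?thesis using r1 r2 by simp
qed

lemma realize_C:
  assumes "wfg V E" "nowit E"
  shows "\<exists>f::nat \<Rightarrow> complex. inj_on f V \<and> (\<forall>a b. {a, b} \<in> E \<longrightarrow> a \<noteq> b \<longrightarrow> cmod (f a - f b) = 1)"
  using assms
proof (induction "card V" arbitrary: V E rule: less_induct)
  case less
  note wf = less.prems(1) and nw = less.prems(2)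
  have finV: "finite V" using wf by (simp add: wfg_def)
  show ?case
  proof (cases "\<exists>v\<in>V. \<not> 2 \<le> card (nb E v)")
    case True
    then obtain v where v: "v \<in> V" "\<not> 2 \<le> card (nb E v)" by blast
    define V' where "V' = V - {v}"
    define E' where "E' = {e\<in>E. e \<inter> {v} = {}}"
    have wf': "wfg V' E'" unfolding V'_def E'_def by (rule wfg_remove[OF wf])
    have nw': "nowit E'" by (rule nowit_mono[OF _ nw]) (auto simp: E'_def)
    have "0 < card V" using v finV card_gt_0_iff by blast
    hence "card V' < card V" using v finV by (simp add: V'_def)
    then obtain f' where f': "inj_on f' V'" "\<forall>a b. {a, b} \<in> E' \<longrightarrow> a \<noteq> b \<longrightarrow> cmod (f' a - f' b) = 1"
      using less.hyps wf' nw' by blast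
    have finN: "finite (nb E v)" using nb_sub[OF wf] finV finite_subset by blast
    have "card (nb E v) \<le> Suc 0" using v by simp
    hence N1: "\<forall>a\<in>nb E v. \<forall>b\<in>nb E v. a = b" using card_le_Suc0_iff_eq[OF finN] by blast
    define u0 where "u0 = (SOME u. u \<in> nb E v)"
    have u0: "b = u0" if b: "b \<in> nb E v" for b
    proof -
      have "u0 \<in> nb E v" unfolding u0_def using b by (rule someI)
      thus ?thesis using N1 b by blast
    qed
    have finV': "finite V'" using finV by (simp add: V'_def)
    obtain z where z: "cmod (z - f' u0) = 1" "z \<notin> f' ` V'"
      using circ_point[of "f' ` V'" "f' u0"] finV' by auto
    define f where "f = f'(v := z)"
    have VV: "V = insert v V'" using v by (auto simp: V'_def)
    have "inj_on f V"
      unfolding VV inj_on_def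
    proof (intro ballI impI)
      fix x y assume x: "x \<in> insert v V'" and y: "y \<in> insert v V'" and e: "f x = f y"
      show "x = y"
      proof (cases "x = v")
        case True
        show ?thesis
        proof (rule ccontr)
          assume "x \<noteq> y" hence "y \<in> V'" "y \<noteq> v" using y True by auto
          hence "f y \<in> f' ` V'" by (simp add: f_def)
          thus False using e True z(2) by (simp add: f_def)
        qed
      next
        case False
        hence xV: "x \<in> V'" using x by auto
        show ?thesis
        proof (cases "y = v")
          case True
          have "f x \<in> f' ` V'" using xV False by (simp add: f_def)
          thus ?thesis using e True z(2) by (simp add: f_def)
        next
          case yv: False
          hence "y \<in> V'" using y by auto
          moreover have "f' x = f' y" using e False yv by (simp add: f_def)
          ultimately show ?thesis using f'(1) xV by (auto dest: inj_onD)
        qed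
      qed
    qed
    moreover have "cmod (f a - f b) = 1" if e: "{a, b} \<in> E" and ab: "a \<noteq> b" for a b
    proof (cases "a = v")
      case True
      hence "b \<in> nb E v" using e by (simp add: nb_def)
      hence "b = u0" by (rule u0)
      thus ?thesis using True ab z(1) by (simp add: f_def)
    next
      case av: False
      show ?thesis
      proof (cases "b = v")
        case True
        hence "a \<in> nb E v" using e by (simp add: nb_def insert_commute)
        hence "a = u0" by (rule u0)
        thus ?thesis using True ab z(1) by (simp add: f_def norm_minus_commute)
      next
        case False
        hence "{a, b} \<in> E'" using e av by (simp add: E'_def)
        thus ?thesis using f'(2) ab av False by (simp add: f_def)
      qed
    qed
    ultimately show ?thesis by blast
  next
    case False
    hence deg: "\<And>v. v \<in> V \<Longrightarrow> 2 \<le> card (nb E v)" by blast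
    show ?thesis
    proof (cases "V = {}")
      case True
      show ?thesis
        by (rule exI[of _ "\<lambda>_. 0::complex"]) (use wfg_edge(2)[OF wf] True in auto)
    next
      case False
      then obtain v0 where v0: "v0 \<in> V" by blast
      have P0: "lpath V E [v0]" using v0 by (simp add: lpath_def gpath_def)
      have bnd: "\<forall>ys. lpath V E ys \<longrightarrow> length ys < Suc (card V)"
      proof (intro allI impI)
        fix ys assume "lpath V E ys"
        hence "distinct ys" "set ys \<subseteq> V" by (auto simp: lpath_def)
        hence "length ys \<le> card V" using card_mono[OF finV] distinct_card by metis
        thus "length ys < Suc (card V)" by simp
      qed
      obtain cs where lg: "longest V E cs"
        using ex_has_greatest_nat[OF P0 bnd] unfolding longest_def by blast
      have lp: "lpath V E cs" using lg by (simp add: longest_def)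
      hence dcs: "distinct cs" and Scs: "set cs \<subseteq> V" and necs: "cs \<noteq> []" by (auto simp: lpath_def)
      define L where "L = length cs"
      have L0: "0 < L" using necs by (simp add: L_def)
      have "cs!0 \<in> V" "cs!(length cs - 1) \<in> V" using Scs necs by auto
      hence cl: "cyc E cs \<and> 3 \<le> length cs" using cyc_longest[OF wf nw lg] deg by blast
      hence c: "cyc E cs" and L3: "3 \<le> L" by (auto simp: L_def)
      define S where "S = set cs"
      define V' where "V' = V - S"
      define E' where "E' = {e\<in>E. e \<inter> S = {}}"
      have wf': "wfg V' E'" unfolding V'_def E'_def by (rule wfg_remove[OF wf])
      have nw': "nowit E'" by (rule nowit_mono[OF _ nw]) (auto simp: E'_def)
      have h: "hd cs \<in> set cs" using necs by simp
      have "V' \<subset> V" unfolding V'_def S_def using Scs h by blast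
      hence "card V' < card V" using finV by (rule psubset_card_mono[rotated])
      then obtain f' where f': "inj_on f' V'" "\<forall>a b. {a, b} \<in> E' \<longrightarrow> a \<noteq> b \<longrightarrow> cmod (f' a - f' b) = 1"
        using less.hyps wf' nw' by blast
      have finV': "finite V'" using finV by (simp add: V'_def)
      obtain Q where Qm: "\<And>s. Q (s mod L) = Q s" and Q1: "\<And>s. cmod (Q (Suc s) - Q s) = 1"
        and Qi: "inj_on Q {..<L}" and Qr: "\<exists>r. \<forall>s. cmod (Q s) = r"
        using polygon[of L] L3 by auto
      define r where "r = cmod (Q 0)"
      have Qr': "\<And>s. cmod (Q s) = r" using Qr by (auto simp: r_def)
      define R where "R = (\<Sum>v\<in>V'. cmod (f' v)) + r + 1"
      define idx where "idx v = the_inv_into {..<L} ((!) cs) v" for v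
      define g where "g v = (if v \<in> S then of_real R + Q (idx v) else f' v)" for v
      have injn: "inj_on ((!) cs) {..<L}" by (rule inj_on_nth[OF dcs]) (simp add: L_def)
      have gS: "g (cs!t) = of_real R + Q t" if "t < L" for t
      proof -
        have "idx (cs!t) = t" unfolding idx_def using the_inv_into_f_f[OF injn] that by simp
        moreover have "cs!t \<in> S" using that by (simp add: S_def L_def)
        ultimately show ?thesis by (simp add: g_def)
      qed
      have Sx: "\<exists>t<L. x = cs!t" if "x \<in> S" for x
        using that by (auto simp: S_def L_def in_set_conv_nth)
      have big: "of_real R + Q t \<noteq> f' y" if y: "y \<in> V'" for t y
      proof -
        have s0: "0 \<le> (\<Sum>v\<in>V'. cmod (f' v))" by (simp add: sum_nonneg)
        have r0: "0 \<le> r" by (simp add: r_def)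
        have a: "cmod (f' y) \<le> (\<Sum>v\<in>V'. cmod (f' v))"
          by (rule member_le_sum[OF y _ finV']) simp
        have b: "cmod (of_real R) - cmod (Q t) \<le> cmod (of_real R + Q t)"
          by (rule norm_diff_ineq)
        have R0: "0 \<le> R" using s0 r0 by (simp add: R_def)
        have c: "cmod (of_real R :: complex) = R" using R0 by (metis norm_of_real abs_of_nonneg)
        have e: "R = (\<Sum>v\<in>V'. cmod (f' v)) + r + 1" by (rule R_def)
        have "cmod (f' y) < cmod (of_real R + Q t)" using a b c e Qr'[of t] by linarith
        thus ?thesis by auto
      qed
      have cedge: "y \<in> S \<and> cmod (g (cs!t) - g y) = 1" if t: "t < L" and e: "{cs!t, y} \<in> E" for t y
      proof -
        have "y = cs!(Suc t mod L) \<or> y = cs!((t + L - 1) mod L)"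
          using cyc_nbrs[OF wf nw lg c _ _ e] L3 t by (simp add: L_def)
        thus ?thesis
        proof
          assume y: "y = cs!(Suc t mod L)"
          have yS: "y \<in> S" using y L0 by (simp add: S_def L_def)
          have "g y = of_real R + Q (Suc t)" using gS[of "Suc t mod L"] L0 y Qm by simp
          hence "cmod (g (cs!t) - g y) = cmod (Q (Suc t) - Q t)"
            using gS[OF t] by (simp add: norm_minus_commute)
          thus ?thesis using Q1 yS by simp
        next
          assume y: "y = cs!((t + L - 1) mod L)"
          have yS: "y \<in> S" using y L0 by (simp add: S_def L_def)
          have "g y = of_real R + Q (t + L - 1)" using gS[of "(t + L - 1) mod L"] L0 y Qm by simp
          moreover have "Q t = Q (Suc (t + L - 1))"
          proof -
            have "Q t = Q ((t + L) mod L)" using t by simp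
            also have "\<dots> = Q (t + L)" by (rule Qm)
            also have "t + L = Suc (t + L - 1)" using L0 by simp
            finally show ?thesis .
          qed
          ultimately have "cmod (g (cs!t) - g y) = cmod (Q (Suc (t + L - 1)) - Q (t + L - 1))"
            using gS[OF t] by simp
          thus ?thesis using Q1 yS by simp
        qed
      qed
      have "inj_on g V"
      proof (rule inj_onI)
        fix x y assume x: "x \<in> V" and y: "y \<in> V" and e: "g x = g y"
        show "x = y"
        proof (cases "x \<in> S")
          case True
          then obtain s where s: "s < L" "x = cs!s" using Sx by blast
          show ?thesis
          proof (cases "y \<in> S")
            case True
            then obtain t where t: "t < L" "y = cs!t" using Sx by blast
            have "Q s = Q t" using e gS[OF s(1)] gS[OF t(1)] s t by simp
            hence "s = t" using Qi s t by (auto dest: inj_onD)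
            thus ?thesis using s t by simp
          next
            case False
            hence "y \<in> V'" using y by (simp add: V'_def)
            moreover have "g y = f' y" using False by (simp add: g_def)
            ultimately show ?thesis using big[of y s] e gS[OF s(1)] s by simp
          qed
        next
          case False
          hence xV: "x \<in> V'" and gx: "g x = f' x" using x by (auto simp: V'_def g_def)
          show ?thesis
          proof (cases "y \<in> S")
            case True
            then obtain t where t: "t < L" "y = cs!t" using Sx by blast
            thus ?thesis using big[OF xV, of t] e gS[OF t(1)] gx by simp
          next
            case yS: False
            hence "y \<in> V'" and "g y = f' y" using y by (auto simp: V'_def g_def)
            thus ?thesis using f'(1) xV e gx by (auto dest: inj_onD)
          qed
        qed
      qed
      moreover have "cmod (g a - g b) = 1" if e: "{a, b} \<in> E" and ab: "a \<noteq> b" for a b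
      proof (cases "a \<in> S")
        case True
        then obtain t where t: "t < L" "a = cs!t" using Sx by blast
        thus ?thesis using cedge[of t b] e by simp
      next
        case aS: False
        show ?thesis
        proof (cases "b \<in> S")
          case True
          then obtain t where t: "t < L" "b = cs!t" using Sx by blast
          have "{cs!t, a} \<in> E" using e t by (simp add: insert_commute)
          thus ?thesis using cedge[of t a] t by (simp add: norm_minus_commute)
        next
          case False
          hence "{a, b} \<in> E'" using e aS by (auto simp: E'_def)
          thus ?thesis using f'(2) ab aS False by (simp add: g_def)
        qed
      qed
      ultimately show ?thesis by blast
    qed
  qed
qed

lemma nowit_realizable:
  assumes "E \<subseteq> all_edges n" "nowit E"
  shows "distance_realizable_R2 {0..<n} E"
proof -
  have wf: "wfg {0..<n} E" using assms(1) unfolding wfg_def all_edges_def by fastforce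
  obtain f :: "nat \<Rightarrow> complex" where f: "inj_on f {0..<n}"
    "\<forall>a b. {a, b} \<in> E \<longrightarrow> a \<noteq> b \<longrightarrow> cmod (f a - f b) = 1"
    using realize_C[OF wf assms(2)] by blast
  obtain \<phi> :: "complex \<Rightarrow> real^2" where lin: "linear \<phi>"
    and nm: "\<And>x. x \<in> UNIV \<Longrightarrow> norm (\<phi> x) = norm x"
  proof -
    obtain f :: "complex \<Rightarrow> real^2" and g :: "real^2 \<Rightarrow> complex" where "linear f"
      "\<And>x. x \<in> UNIV \<Longrightarrow> norm (f x) = norm x"
      by (rule isometries_subspaces[of "UNIV :: complex set" "UNIV :: (real^2) set"]) auto
    thus ?thesis using that by blast
  qed
  have dphi: "dist (\<phi> x) (\<phi> y) = cmod (x - y)" for x y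
    by (simp add: dist_norm linear_diff[OF lin, symmetric] nm)
  have "inj_on (\<phi> \<circ> f) {0..<n}"
  proof (rule inj_onI)
    fix x y assume "x \<in> {0..<n}" "y \<in> {0..<n}" "(\<phi> \<circ> f) x = (\<phi> \<circ> f) y"
    moreover have "dist (\<phi> (f x)) (\<phi> (f y)) = cmod (f x - f y)" by (rule dphi)
    ultimately show "x = y" using f(1) by (auto dest: inj_onD)
  qed
  moreover have "dist ((\<phi> \<circ> f) u) ((\<phi> \<circ> f) v) = 1" if "e \<in> E" "u \<in> e" "v \<in> e" "u \<noteq> v" for e u v
  proof -
    have "e = {u, v}" using that assms(1) unfolding all_edges_def by auto
    thus ?thesis using that f(2) dphi by auto
  qed
  ultimately show ?thesis unfolding distance_realizable_R2_def by blast
qed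

theorem theorem5:
  fixes c :: real
  assumes "0 \<le> c" and "c < 1"
  shows "(\<lambda>n. gnp_prob n (c / real n) (\<lambda>E. distance_realizable_R2 {0..<n} E))
           \<longlonglongrightarrow> 1"
proof -
  define S where "S = (\<Sum>l. real l ^ 2 * c ^ (l + 1))"
  have sm: "summable (\<lambda>l. real l ^ 2 * c ^ (l + 1))" by (rule summable_sq_geom[OF assms])
  let ?g = "\<lambda>n. gnp_prob n (c / real n) (\<lambda>E. distance_realizable_R2 {0..<n} E)"
  have lower: "1 - S / real n \<le> ?g n" if n: "n \<ge> 1" for n
  proof -
    define p where "p = c / real n"
    have p0: "0 \<le> p" and p1: "p \<le> 1" using assms n by (auto simp: p_def)
    have "?g n \<ge> gnp_prob n p nowit"
      unfolding p_def[symmetric] by (rule gnp_mono[OF p0 p1]) (rule nowit_realizable)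
    moreover have "gnp_prob n p nowit = 1 - gnp_prob n p (\<lambda>E. \<not> nowit E)"
      by (rule gnp_compl)
    moreover have "gnp_prob n p (\<lambda>E. \<not> nowit E) \<le> (\<Sum>l\<le>n. real n ^ l * real l ^ 2 * p ^ (l + 1))"
      by (rule bad_bound[OF p0 p1])
    moreover have "(\<Sum>l\<le>n. real n ^ l * real l ^ 2 * p ^ (l + 1)) = (\<Sum>l\<le>n. real l ^ 2 * c ^ (l + 1)) / real n"
      unfolding sum_divide_distrib
    proof (rule sum.cong[OF refl])
      fix l
      have "real n ^ l * p ^ (l + 1) = c ^ (l + 1) / real n"
        using n by (simp add: p_def power_divide field_simps)
      thus "real n ^ l * real l ^ 2 * p ^ (l + 1) = real l ^ 2 * c ^ (l + 1) / real n"
        by (metis (no_types, lifting) mult.commute mult.left_commute times_divide_eq_right)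
    qed
    moreover have "(\<Sum>l\<le>n. real l ^ 2 * c ^ (l + 1)) \<le> S"
      unfolding S_def atMost_atLeast0 using sm assms
      by (intro sum_le_suminf) auto
    hence "(\<Sum>l\<le>n. real l ^ 2 * c ^ (l + 1)) / real n \<le> S / real n"
      using n by (simp add: divide_right_mono)
    ultimately show ?thesis by linarith
  qed
  have upper: "?g n \<le> 1" if n: "n \<ge> 1" for n
  proof -
    have p0: "0 \<le> c / real n" and p1: "c / real n \<le> 1" using assms n by auto
    have "?g n \<le> gnp_prob n (c / real n) (\<lambda>E. True)" by (rule gnp_mono[OF p0 p1]) simp
    thus ?thesis using gnp_total by simp
  qed
  show ?thesis
  proof (rule tendsto_sandwich)
    show "eventually (\<lambda>n. 1 - S / real n \<le> ?g n) sequentially"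
      using lower by (auto simp: eventually_at_top_linorder)
    show "eventually (\<lambda>n. ?g n \<le> 1) sequentially"
      using upper by (auto simp: eventually_at_top_linorder)
    show "(\<lambda>n. 1 - S / real n) \<longlonglongrightarrow> 1"
      using tendsto_diff[OF tendsto_const lim_const_over_n[of S]] by simp
    show "(\<lambda>n. 1::real) \<longlonglongrightarrow> 1" by simp
  qed
qed

end
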